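(* Let $i,m\in\mathbb{N}$ with $i\ge1$, let $v\in\mathbb{R}^i$ and $\omega_0\in\mathbb{R}^n$. Then either there exists $k_0\ge i$ such that $CB^mQ_i^k(v)\omega_0\neq0$ for all $k\ge k_0$, or $CB^mQ_i^k(v)\omega_0=0$ for all $k\ge i$.
   Context: Let $n\ge1$, $A,B\in\mathrm{End}(\mathbb{R}^n)$, $C\in\mathcal{L}(\mathbb{R}^n,\mathbb{R})$. Polynomials have commuting scalar indeterminates $X_0,X_1,\dots$ and coefficients in $\mathrm{End}(\mathbb{R}^n)$. Define the linear map $\Psi$ by $\Psi(P)(X_0,\dots,X_k)=P(X_0,\dots,X_{k-1})(A+X_0B)+\sum_{i=0}^{k-1}\frac{\partial P}{\partial X_i}(X_0,\dots,X_{k-1})X_{i+1}$, where $k$ is the least $\ell$ such that $P$ involves only $X_0,\dots,X_{\ell-1}$. Let $P_0=I$, $P_{k+1}=\Psi(P_k)$, and for $1\le i\le k$ let $Q_i^k=\partial P_k/\partial X_{k-i}$. Each $Q_i^k$ ($k\ge i$) is a polynomial in $X_0,\dots,X_{i-1}$ only, and $Q_i^k(v)$ denotes its evaluation at $(X_0,\dots,X_{i-1})=v$. *)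

theory Defs
  imports "HOL-Analysis.Analysis" "HOL-Library.Poly_Mapping"
begin

text \<open>Polynomials in commuting scalar indeterminates X_0, X_1, ... with coefficients in
  End(R^n) (n x n real matrices, product written **). A monomial is a finitely supported
  exponent vector (a finitely supported map nat to nat); a polynomial is its coefficient function.
  All polynomials arising below have finitely many nonzero coefficients.\<close>

type_synonym monom = "nat \<Rightarrow>\<^sub>0 nat"
type_synonym 'n mpoly_mat = "monom \<Rightarrow> real^'n^'n"

text \<open>P involves only X_0,...,X_(l-1).\<close>
definition involves_only :: "('n::finite) mpoly_mat \<Rightarrow> nat \<Rightarrow> bool" where
  "involves_only P l \<longleftrightarrow> (\<forall>m. P m \<noteq> 0 \<longrightarrow> (\<forall>j\<ge>l. Poly_Mapping.lookup m j = 0))"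

text \<open>The least l such that P involves only X_0,...,X_(l-1).\<close>
definition nvars :: "('n::finite) mpoly_mat \<Rightarrow> nat" where
  "nvars P = (LEAST l. involves_only P l)"

text \<open>Formal partial derivative with respect to X_j.\<close>
definition pderiv_mp :: "nat \<Rightarrow> ('n::finite) mpoly_mat \<Rightarrow> ('n::finite) mpoly_mat" where
  "pderiv_mp j P = (\<lambda>m. real (Poly_Mapping.lookup m j + 1) *\<^sub>R P (m + Poly_Mapping.single j 1))"

text \<open>Multiplication by the indeterminate X_j.\<close>
definition mulX :: "nat \<Rightarrow> ('n::finite) mpoly_mat \<Rightarrow> ('n::finite) mpoly_mat" where
  "mulX j P = (\<lambda>m. if 1 \<le> Poly_Mapping.lookup m j then P (m - Poly_Mapping.single j 1) else 0)"

text \<open>Right multiplication of every coefficient by a matrix M.\<close>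
definition rmul :: "('n::finite) mpoly_mat \<Rightarrow> real^'n^'n \<Rightarrow> ('n::finite) mpoly_mat" where
  "rmul P M = (\<lambda>m. P m ** M)"

text \<open>Psi(P) = P (A + X_0 B) + sum_(i<k) dP/dX_i X_(i+1), k = nvars P.\<close>
definition Psi :: "real^('n::finite)^'n \<Rightarrow> real^'n^'n \<Rightarrow> ('n::finite) mpoly_mat \<Rightarrow> ('n::finite) mpoly_mat" where
  "Psi A B P = (\<lambda>m. rmul P A m + mulX 0 (rmul P B) m
                    + (\<Sum>i<nvars P. mulX (Suc i) (pderiv_mp i P) m))"

text \<open>The constant polynomial I.\<close>
definition one_mp :: "('n::finite) mpoly_mat" where
  "one_mp = (\<lambda>m. if m = 0 then mat 1 else 0)"

text \<open>P_0 = I, P_(k+1) = Psi(P_k).\<close>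
primrec Pseq :: "real^('n::finite)^'n \<Rightarrow> real^'n^'n \<Rightarrow> nat \<Rightarrow> ('n::finite) mpoly_mat" where
  "Pseq A B 0 = one_mp"
| "Pseq A B (Suc k) = Psi A B (Pseq A B k)"

text \<open>Q_i^k = dP_k/dX_(k-i).\<close>
definition Qpoly :: "real^('n::finite)^'n \<Rightarrow> real^'n^'n \<Rightarrow> nat \<Rightarrow> nat \<Rightarrow> ('n::finite) mpoly_mat" where
  "Qpoly A B i k = pderiv_mp (k - i) (Pseq A B k)"

text \<open>Evaluation of a (finitely supported) polynomial at a point x : nat \<Rightarrow> real.\<close>
definition eval_mp :: "('n::finite) mpoly_mat \<Rightarrow> (nat \<Rightarrow> real) \<Rightarrow> real^'n^'n" where
  "eval_mp P x = (\<Sum>m\<in>{m. P m \<noteq> 0}. (\<Prod>j\<in>Poly_Mapping.keys m. x j ^ Poly_Mapping.lookup m j) *\<^sub>R P m)"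

text \<open>Evaluation at (X_0,...,X_(i-1)) = v for v in R^i given as a list of length i.\<close>
definition eval_at_list :: "('n::finite) mpoly_mat \<Rightarrow> real list \<Rightarrow> real^'n^'n" where
  "eval_at_list P v = eval_mp P (\<lambda>j. if j < length v then v ! j else 0)"

end

theory Submission
  imports Defs "HOL-Library.Function_Algebras"
begin

abbreviation dl :: "nat \<Rightarrow> monom" where "dl j \<equiv> Poly_Mapping.single j 1"

lemma lookup_add_dl: "Poly_Mapping.lookup (m + dl j) l = Poly_Mapping.lookup m l + (if j = l then 1 else 0)"
  by (simp add: lookup_add lookup_single)

lemma lookup_minus_dl: "Poly_Mapping.lookup (m - dl j) l = Poly_Mapping.lookup m l - (if j = l then 1 else 0)"
  by (simp add: lookup_minus lookup_single)

lemma add_dl_minus: "m + dl j - dl j = (m::monom)"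
  by simp

lemma minus_dl_add: "1 \<le> Poly_Mapping.lookup m j \<Longrightarrow> m - dl j + dl j = (m::monom)"
  by (rule poly_mapping_eqI) (auto simp add: lookup_add lookup_minus lookup_single when_def)

lemma dl_comm: "m + dl j - dl l = m - dl l + dl j" if "j \<noteq> l" "1 \<le> Poly_Mapping.lookup m l" for m :: monom
  using that by (intro poly_mapping_eqI) (auto simp add: lookup_add lookup_minus lookup_single when_def)

lemma dl_comm': "m + Poly_Mapping.single j (Suc 0) - Poly_Mapping.single l (Suc 0) = m - Poly_Mapping.single l (Suc 0) + Poly_Mapping.single j (Suc 0)"
  if "j \<noteq> l" "Suc 0 \<le> Poly_Mapping.lookup m l" for m :: monom
  using dl_comm[OF that(1)] that by simp

lemma minus_dl_add': "Suc 0 \<le> Poly_Mapping.lookup m j \<Longrightarrow> Poly_Mapping.single j (Suc 0) + (m - Poly_Mapping.single j (Suc 0)) = (m::monom)"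
  using minus_dl_add[of m j] by (simp add: add.commute)

lemma matrix_diff_rdistrib: "(X - Y) ** M = X ** M - Y ** (M::real^'n^'n)"
  by (vector matrix_matrix_mult_def sum_subtractf left_diff_distrib)

lemma matrix_add_rdistrib': "(X + Y) ** M = X ** M + Y ** (M::real^'n^'n)"
  by (vector matrix_matrix_mult_def sum.distrib distrib_right)

lemma pd_mulX_other:
  assumes "j \<noteq> l"
  shows "pderiv_mp j (mulX l P) = mulX l (pderiv_mp j P)"
proof (rule ext)
  fix m :: monom
  show "pderiv_mp j (mulX l P) m = mulX l (pderiv_mp j P) m"
  proof (cases "1 \<le> Poly_Mapping.lookup m l")
    case True
    then show ?thesis using assms
      by (simp add: pderiv_mp_def mulX_def lookup_add lookup_minus lookup_single when_def dl_comm')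
  next
    case False
    then show ?thesis using assms
      by (simp add: pderiv_mp_def mulX_def lookup_add lookup_single when_def)
  qed
qed

lemma pd_mulX_same:
  "pderiv_mp j (mulX j P) = (\<lambda>m. mulX j (pderiv_mp j P) m + P m)"
proof (rule ext)
  fix m :: monom
  show "pderiv_mp j (mulX j P) m = mulX j (pderiv_mp j P) m + P m"
  proof (cases "1 \<le> Poly_Mapping.lookup m j")
    case True
    then have "Poly_Mapping.lookup m j = Suc (Poly_Mapping.lookup m j - 1)" by simp
    then show ?thesis using True
      by (simp add: pderiv_mp_def mulX_def lookup_add lookup_minus lookup_single when_def minus_dl_add'
            scaleR_left_distrib algebra_simps)
  next
    case False
    then have "Poly_Mapping.lookup m j = 0" by simp
    then show ?thesis
      by (simp add: pderiv_mp_def mulX_def lookup_add lookup_single when_def)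
  qed
qed

lemma pd_rmul: "pderiv_mp j (rmul P M) = rmul (pderiv_mp j P) M"
  by (rule ext) (simp add: pderiv_mp_def rmul_def scalar_matrix_assoc)

lemma pd_comm: "pderiv_mp j (pderiv_mp l P) = pderiv_mp l (pderiv_mp j P)"
  by (rule ext) (simp add: pderiv_mp_def lookup_add lookup_single when_def add.commute add.left_commute)

lemma pd_zero [simp]: "pderiv_mp j (\<lambda>m. 0) = (\<lambda>m. 0)"
  by (simp add: pderiv_mp_def)

lemma mulX_zero [simp]: "mulX j (\<lambda>m. 0) = (\<lambda>m. 0)"
  by (simp add: mulX_def fun_eq_iff)

lemma pd_plus: "pderiv_mp j (\<lambda>m. f m + g m) = (\<lambda>m. pderiv_mp j f m + pderiv_mp j g m)"
  by (simp add: pderiv_mp_def fun_eq_iff scaleR_right_distrib)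

lemma pd_sum: "pderiv_mp j (\<lambda>m. \<Sum>l\<in>S. F l m) = (\<lambda>m. \<Sum>l\<in>S. pderiv_mp j (F l) m)"
  by (simp add: pderiv_mp_def fun_eq_iff scaleR_sum_right)

definition Tn :: "real^('n::finite)^'n \<Rightarrow> real^'n^'n \<Rightarrow> nat \<Rightarrow> 'n mpoly_mat \<Rightarrow> 'n mpoly_mat" where
  "Tn A B N P = (\<lambda>m. rmul P A m + mulX 0 (rmul P B) m + (\<Sum>l<N. mulX (Suc l) (pderiv_mp l P) m))"

lemma Psi_Tn_nvars: "Psi A B P = Tn A B (nvars P) P"
  by (simp add: Psi_def Tn_def)

lemma io_pd_zero:
  assumes "involves_only P N" "N \<le> l"
  shows "pderiv_mp l P = (\<lambda>m. 0)"
proof (rule ext)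
  fix m :: monom
  show "pderiv_mp l P m = 0"
  proof (cases "P (m + dl l) = 0")
    case False
    then have "Poly_Mapping.lookup (m + dl l) l = 0" using assms unfolding involves_only_def by blast
    then show ?thesis by (simp add: lookup_add)
  qed (simp add: pderiv_mp_def)
qed

lemma Tn_cong:
  assumes "involves_only P M" "M \<le> N"
  shows "Tn A B N P = Tn A B M P"
proof -
  have "(\<Sum>l<N. mulX (Suc l) (pderiv_mp l P) m) = (\<Sum>l<M. mulX (Suc l) (pderiv_mp l P) m)" for m
    by (rule sum.mono_neutral_right) (use assms io_pd_zero[OF assms(1)] in auto)
  then show ?thesis by (simp add: Tn_def)
qed

lemma nvars_props:
  assumes "involves_only P N"
  shows "nvars P \<le> N" "involves_only P (nvars P)"
  using assms unfolding nvars_def by (auto intro: Least_le LeastI)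

lemma Psi_Tn:
  assumes "involves_only P N"
  shows "Psi A B P = Tn A B N P"
  using Tn_cong[OF nvars_props(2)[OF assms] nvars_props(1)[OF assms]] Psi_Tn_nvars by metis

lemma io_mono: "involves_only P M \<Longrightarrow> M \<le> N \<Longrightarrow> involves_only P N"
  unfolding involves_only_def by auto

lemma io_pd: "involves_only P N \<Longrightarrow> involves_only (pderiv_mp j P) N"
  unfolding involves_only_def pderiv_mp_def
  by (auto simp: lookup_add)

lemma io_rmul: "involves_only P N \<Longrightarrow> involves_only (rmul P M) N"
  unfolding involves_only_def rmul_def by (metis times0_left)

lemma io_mulX: "involves_only P N \<Longrightarrow> l < N \<Longrightarrow> involves_only (mulX l P) N"
  unfolding involves_only_def mulX_def
  by (auto simp: lookup_minus lookup_single when_def split: if_splits)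

lemma io_add: "involves_only P N \<Longrightarrow> involves_only Q N \<Longrightarrow> involves_only (\<lambda>m. P m + Q m) N"
  unfolding involves_only_def by (metis add.right_neutral)

lemma io_sum: "(\<And>l. l \<in> S \<Longrightarrow> involves_only (F l) N) \<Longrightarrow> involves_only (\<lambda>m. \<Sum>l\<in>S. F l m) N"
  unfolding involves_only_def by (metis (mono_tags, lifting) sum.neutral)

lemma io_Tn:
  assumes "involves_only P N"
  shows "involves_only (Tn A B N P) (Suc N)"
proof -
  have P': "involves_only P (Suc N)" using io_mono[OF assms] by simp
  show ?thesis unfolding Tn_def
    by (intro io_add io_sum io_rmul io_mulX io_pd P' assms) (auto intro: io_mono[OF io_pd[OF assms]])
qed

lemma io_one: "involves_only one_mp 0"
  unfolding involves_only_def one_mp_def by auto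

lemma io_Pseq: "involves_only (Pseq A B k) k"
proof (induction k)
  case 0
  then show ?case using io_one by simp
next
  case (Suc k)
  then show ?case using io_Tn Psi_Tn by (metis Pseq.simps(2))
qed

lemma Pseq_Suc_Tn: "Pseq A B (Suc k) = Tn A B k (Pseq A B k)"
  using Psi_Tn[OF io_Pseq] by simp

lemma pd_Tn:
  assumes "j' < N"
  shows "pderiv_mp (Suc j') (Tn A B N P) = (\<lambda>m. Tn A B N (pderiv_mp (Suc j') P) m + pderiv_mp j' P m)"
proof -
  have t: "pderiv_mp (Suc j') (mulX (Suc l) (pderiv_mp l P)) m
     = mulX (Suc l) (pderiv_mp l (pderiv_mp (Suc j') P)) m + (if l = j' then pderiv_mp j' P m else 0)" for l m
  proof (cases "l = j'")
    case True
    then show ?thesis by (simp add: pd_mulX_same pd_comm)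
  next
    case False
    then show ?thesis by (simp add: pd_mulX_other pd_comm)
  qed
  have s: "(\<Sum>l<N. pderiv_mp (Suc j') (mulX (Suc l) (pderiv_mp l P)) m)
      = (\<Sum>l<N. mulX (Suc l) (pderiv_mp l (pderiv_mp (Suc j') P)) m) + pderiv_mp j' P m" for m
    using assms by (simp add: t sum.distrib)
  show ?thesis
    unfolding Tn_def pd_plus pd_sum
    by (simp add: s pd_rmul pd_mulX_other algebra_simps)
qed

lemma Q_zero: "Qpoly A B 0 k = (\<lambda>m. 0)"
  unfolding Qpoly_def by (rule io_pd_zero[OF io_Pseq]) simp

lemma Q_rec:
  assumes "1 \<le> i" "i \<le> k"
  shows "Qpoly A B i (Suc k) = (\<lambda>m. Tn A B k (Qpoly A B (i - 1) k) m + Qpoly A B i k m)"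
proof -
  have e1: "Suc k - i = Suc (k - i)" "k - (i - 1) = Suc (k - i)" using assms by auto
  have "k - i < k" using assms by auto
  then have "pderiv_mp (Suc (k - i)) (Tn A B k (Pseq A B k)) =
     (\<lambda>m. Tn A B k (pderiv_mp (Suc (k - i)) (Pseq A B k)) m + pderiv_mp (k - i) (Pseq A B k) m)"
    by (rule pd_Tn)
  then show ?thesis
    by (simp only: Qpoly_def Pseq_Suc_Tn e1)
qed

lemma io_zero: "involves_only (\<lambda>m. 0) N"
  unfolding involves_only_def by simp

lemma io_Q: "i \<le> k \<Longrightarrow> involves_only (Qpoly A B i k) i"
proof (induction i arbitrary: k)
  case 0
  then show ?case by (simp add: Q_zero io_zero)
next
  case (Suc i)
  from Suc.prems show ?case
  proof (induction k rule: dec_induct)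
    case base
    have "Qpoly A B (Suc i) (Suc i) = pderiv_mp 0 (Pseq A B (Suc i))"
      by (simp only: Qpoly_def diff_self_eq_0)
    then show ?case using io_pd[OF io_Pseq[of A B "Suc i"]] by (simp only:)
  next
    case (step k)
    have io1: "involves_only (Qpoly A B i k) i" using Suc.IH step by simp
    have "Tn A B k (Qpoly A B i k) = Tn A B i (Qpoly A B i k)"
      by (rule Tn_cong[OF io1]) (use step in simp)
    have r: "Qpoly A B (Suc i) (Suc k) = (\<lambda>m. Tn A B k (Qpoly A B i k) m + Qpoly A B (Suc i) k m)"
      using Q_rec[of "Suc i" k A B] step(1) unfolding diff_Suc_1 by simp
    show ?case
      unfolding r \<open>Tn A B k (Qpoly A B i k) = Tn A B i (Qpoly A B i k)\<close>
      by (rule io_add[OF io_Tn[OF io1] step(3)])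
  qed
qed

lemma Q_rec':
  assumes "Suc i \<le> k"
  shows "Qpoly A B (Suc i) (Suc k) = (\<lambda>m. Tn A B i (Qpoly A B i k) m + Qpoly A B (Suc i) k m)"
proof -
  have "Tn A B k (Qpoly A B i k) = Tn A B i (Qpoly A B i k)"
    by (rule Tn_cong[OF io_Q[of i k A B]]) (use assms in simp_all)
  then show ?thesis using Q_rec[of "Suc i" k A B] assms unfolding diff_Suc_1 by simp
qed

fun fdiff :: "nat \<Rightarrow> (nat \<Rightarrow> 'a::ab_group_add) \<Rightarrow> nat \<Rightarrow> 'a" where
  "fdiff 0 f = f"
| "fdiff (Suc d) f = fdiff d (\<lambda>k. f (Suc k) - f k)"

lemma fdiff_cong: "(\<And>j. j \<ge> k0 \<Longrightarrow> f j = g j) \<Longrightarrow> k \<ge> k0 \<Longrightarrow> fdiff d f k = fdiff d g k"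
proof (induction d arbitrary: f g k0 k)
  case 0
  then show ?case by simp
next
  case (Suc d)
  show ?case
    by (simp only: fdiff.simps) (rule Suc.IH[of k0], use Suc.prems in auto)
qed

lemma fdiff_comp:
  assumes "\<And>a b. a \<in> S \<Longrightarrow> b \<in> S \<Longrightarrow> a - b \<in> S"
    and "\<And>a b. a \<in> S \<Longrightarrow> b \<in> S \<Longrightarrow> F (a - b) = F a - F b"
    and "\<And>k. f k \<in> S"
  shows "fdiff d (\<lambda>k. F (f k)) k = F (fdiff d f k) \<and> fdiff d f k \<in> S"
  using assms(3)
proof (induction d arbitrary: f k)
  case 0
  then show ?case by simp
next
  case (Suc d)
  have "\<And>k. f (Suc k) - f k \<in> S" using assms(1) Suc.prems by blast
  note ih = Suc.IH[OF this]
  have "(\<lambda>k. F (f (Suc k)) - F (f k)) = (\<lambda>k. F (f (Suc k) - f k))"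
    using assms(2) Suc.prems by auto
  then show ?case using ih by simp
qed

lemma rmul_diff: "rmul (P - Q) M = rmul P M - rmul Q M"
  by (rule ext) (simp add: rmul_def matrix_diff_rdistrib)

lemma mulX_diff: "mulX j (P - Q) = mulX j P - mulX j Q"
  by (rule ext) (simp add: mulX_def)

lemma pd_diff: "pderiv_mp j (P - Q) = pderiv_mp j P - pderiv_mp j Q"
  by (rule ext) (simp add: pderiv_mp_def scaleR_right_diff_distrib)

lemma Tn_diff: "Tn A B N (P - Q) = Tn A B N P - Tn A B N Q"
  by (rule ext) (simp add: Tn_def rmul_diff mulX_diff pd_diff sum_subtractf algebra_simps)

lemma Tn_0: "Tn A B N 0 = 0"
  by (rule ext) (simp add: Tn_def rmul_def mulX_def pderiv_mp_def)

lemma Q_fdiff: "\<exists>d. \<forall>k\<ge>i. fdiff d (Qpoly A B i) k = 0"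
proof (induction i)
  case 0
  have "Qpoly A B 0 = (\<lambda>k. 0)" using Q_zero by (auto simp: fun_eq_iff)
  then show ?case by (intro exI[of _ 0]) simp
next
  case (Suc i)
  then obtain d where d: "\<forall>k\<ge>i. fdiff d (Qpoly A B i) k = 0" by blast
  have "fdiff (Suc d) (Qpoly A B (Suc i)) k = 0" if k: "k \<ge> Suc i" for k
  proof -
    have "fdiff (Suc d) (Qpoly A B (Suc i)) k
        = fdiff d (\<lambda>k. Qpoly A B (Suc i) (Suc k) - Qpoly A B (Suc i) k) k" by simp
    also have "\<dots> = fdiff d (\<lambda>k. Tn A B i (Qpoly A B i k)) k"
    proof (rule fdiff_cong[of "Suc i"])
      fix j assume "Suc i \<le> j"
      from Q_rec'[OF this, of A B] show "Qpoly A B (Suc i) (Suc j) - Qpoly A B (Suc i) j = Tn A B i (Qpoly A B i j)"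
        by (simp add: fun_eq_iff)
    qed (use k in simp)
    also have "\<dots> = Tn A B i (fdiff d (Qpoly A B i) k)"
      using fdiff_comp[of UNIV "Tn A B i" "Qpoly A B i" d k] by (simp add: Tn_diff)
    also have "\<dots> = 0" using d k Tn_0 by simp
    finally show ?thesis .
  qed
  then show ?case by blast
qed

definition fs :: "('n::finite) mpoly_mat \<Rightarrow> bool" where
  "fs P \<longleftrightarrow> finite {m. P m \<noteq> 0}"

lemma fs_pd: "fs P \<Longrightarrow> fs (pderiv_mp j P)"
  unfolding fs_def
proof -
  assume f: "finite {m. P m \<noteq> 0}"
  have "{m. pderiv_mp j P m \<noteq> 0} \<subseteq> (\<lambda>m. m - dl j) ` {m. P m \<noteq> 0}"
  proof
    fix m assume "m \<in> {m. pderiv_mp j P m \<noteq> 0}"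
    then have "P (m + dl j) \<noteq> 0" by (auto simp: pderiv_mp_def)
    then show "m \<in> (\<lambda>m. m - dl j) ` {m. P m \<noteq> 0}"
      by (intro image_eqI[of _ _ "m + dl j"]) auto
  qed
  then show "finite {m. pderiv_mp j P m \<noteq> 0}" using f finite_surj by blast
qed

lemma fs_mulX: "fs P \<Longrightarrow> fs (mulX j P)"
  unfolding fs_def
proof -
  assume f: "finite {m. P m \<noteq> 0}"
  have "{m. mulX j P m \<noteq> 0} \<subseteq> (\<lambda>m. m + dl j) ` {m. P m \<noteq> 0}"
  proof
    fix m assume "m \<in> {m. mulX j P m \<noteq> 0}"
    then have "P (m - dl j) \<noteq> 0" "1 \<le> Poly_Mapping.lookup m j" by (auto simp: mulX_def split: if_splits)
    moreover have "m = m - dl j + dl j" using minus_dl_add[of m j] calculation(2) by simp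
    ultimately show "m \<in> (\<lambda>m. m + dl j) ` {m. P m \<noteq> 0}"
      by (intro image_eqI[of _ _ "m - dl j"]) auto
  qed
  then show "finite {m. mulX j P m \<noteq> 0}" using f finite_surj by blast
qed

lemma fs_rmul: "fs P \<Longrightarrow> fs (rmul P M)"
  unfolding fs_def rmul_def by (rule finite_subset[rotated]) auto

lemma fs_add: "fs P \<Longrightarrow> fs Q \<Longrightarrow> fs (\<lambda>m. P m + Q m)"
  unfolding fs_def by (rule finite_subset[of _ "{m. P m \<noteq> 0} \<union> {m. Q m \<noteq> 0}"]) auto

lemma fs_diff: "fs P \<Longrightarrow> fs Q \<Longrightarrow> fs (P - Q)"
  unfolding fs_def by (rule finite_subset[of _ "{m. P m \<noteq> 0} \<union> {m. Q m \<noteq> 0}"]) auto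

lemma fs_sum: "finite S \<Longrightarrow> (\<And>l. l \<in> S \<Longrightarrow> fs (F l)) \<Longrightarrow> fs (\<lambda>m. \<Sum>l\<in>S. F l m)"
proof (induction S rule: finite_induct)
  case empty
  then show ?case by (simp add: fs_def)
next
  case (insert x S')
  then show ?case using fs_add[of "F x"] by simp
qed

lemma fs_Tn: "fs P \<Longrightarrow> fs (Tn A B N P)"
  unfolding Tn_def by (intro fs_add fs_sum fs_rmul fs_mulX fs_pd) auto

lemma fs_Pseq: "fs (Pseq A B k)"
proof (induction k)
  case 0
  then show ?case by (simp add: fs_def one_mp_def)
next
  case (Suc k)
  then show ?case using fs_Tn Pseq_Suc_Tn by metis
qed

lemma fs_Q: "fs (Qpoly A B i k)"
  unfolding Qpoly_def by (rule fs_pd[OF fs_Pseq])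

lemma eval_sup:
  assumes "finite S" "{m. P m \<noteq> 0} \<subseteq> S"
  shows "eval_mp P x = (\<Sum>m\<in>S. (\<Prod>j\<in>Poly_Mapping.keys m. x j ^ Poly_Mapping.lookup m j) *\<^sub>R P m)"
  unfolding eval_mp_def by (rule sum.mono_neutral_left) (use assms in auto)

lemma eval_diff:
  assumes "fs P" "fs Q"
  shows "eval_mp (P - Q) x = eval_mp P x - eval_mp Q x"
proof -
  let ?S = "{m. P m \<noteq> 0} \<union> {m. Q m \<noteq> 0}"
  have f: "finite ?S" using assms by (simp add: fs_def)
  have sub: "{m. (P - Q) m \<noteq> 0} \<subseteq> ?S" by auto
  show ?thesis
    using eval_sup[OF f, of P x] eval_sup[OF f, of Q x] eval_sup[OF f sub, of x]
    by (simp add: scaleR_right_diff_distrib sum_subtractf fun_diff_def)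
qed

lemma iter_diff: "(((*v) (B::real^'n^'n)) ^^ m) (a - b) = (((*v) B) ^^ m) a - (((*v) B) ^^ m) (b::real^'n)"
proof (induction m)
  case 0
  then show ?case by (simp add: funpow.simps)
next
  case (Suc m)
  then show ?case by (simp add: funpow.simps matrix_vector_mult_diff_distrib)
qed

lemma iter_zero: "(((*v) (B::real^'n^'n)) ^^ m) 0 = (0::real^'n)"
  using iter_diff[where B=B and m=m and a=0 and b=0] by simp

lemma incr_lemma:
  fixes h :: "nat \<Rightarrow> real"
  assumes "\<forall>k\<ge>k0. h (Suc k) - h k > 0"
  shows "(\<exists>k1\<ge>k0. \<forall>k\<ge>k1. h k > 0) \<or> (\<forall>k\<ge>k0. h k < 0)"
proof (cases "\<exists>k1\<ge>k0. h k1 > 0")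
  case True
  then obtain k1 where k1: "k1 \<ge> k0" "h k1 > 0" by blast
  have "h k > 0" if "k \<ge> k1" for k
    using that
  proof (induction k rule: dec_induct)
    case base then show ?case using k1 by simp
  next
    case (step k)
    then have "h (Suc k) - h k > 0" using assms k1 by simp
    then show ?case using step by simp
  qed
  then show ?thesis using k1 by blast
next
  case False
  have "h k < 0" if "k \<ge> k0" for k
  proof -
    have "h (Suc k) \<le> 0" using False that by (meson le_SucI not_less)
    moreover have "h (Suc k) - h k > 0" using assms that by simp
    ultimately show ?thesis by simp
  qed
  then show ?thesis by blast
qed

lemma real_seq_lemma:
  fixes h :: "nat \<Rightarrow> real"
  assumes "\<forall>k\<ge>i. fdiff d h k = 0"
  shows "(\<exists>k0\<ge>i. \<forall>k\<ge>k0. h k > 0) \<or> (\<exists>k0\<ge>i. \<forall>k\<ge>k0. h k < 0) \<or> (\<forall>k\<ge>i. h k = 0)"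
  using assms
proof (induction d arbitrary: h)
  case 0
  then show ?case by simp
next
  case (Suc d)
  have "\<forall>k\<ge>i. fdiff d (\<lambda>k. h (Suc k) - h k) k = 0" using Suc.prems by simp
  from Suc.IH[OF this] consider
    (p) k0 where "k0 \<ge> i" "\<forall>k\<ge>k0. h (Suc k) - h k > 0"
  | (n) k0 where "k0 \<ge> i" "\<forall>k\<ge>k0. h (Suc k) - h k < 0"
  | (z) "\<forall>k\<ge>i. h (Suc k) - h k = 0" by blast
  then show ?case
  proof cases
    case p
    from incr_lemma[OF p(2)] show ?thesis
    proof
      assume "\<exists>k1\<ge>k0. \<forall>k\<ge>k1. h k > 0"
      then obtain k1 where "k1 \<ge> k0" "\<forall>k\<ge>k1. h k > 0" by blast
      then have "k1 \<ge> i \<and> (\<forall>k\<ge>k1. h k > 0)" using p(1) by simp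
      then show ?thesis by blast
    next
      assume "\<forall>k\<ge>k0. h k < 0"
      then show ?thesis using p(1) by blast
    qed
  next
    case n
    have "\<forall>k\<ge>k0. (- h (Suc k)) - (- h k) > 0" using n(2) by auto
    from incr_lemma[OF this] show ?thesis
    proof
      assume "\<exists>k1\<ge>k0. \<forall>k\<ge>k1. - h k > 0"
      then obtain k1 where "k1 \<ge> k0" "\<forall>k\<ge>k1. - h k > 0" by blast
      then have "k1 \<ge> i \<and> (\<forall>k\<ge>k1. h k < 0)" using n(1) by simp
      then show ?thesis by blast
    next
      assume "\<forall>k\<ge>k0. - h k < 0"
      then have "\<forall>k\<ge>k0. h k > 0" by simp
      then show ?thesis using n(1) by blast
    qed
  next
    case z
    have c: "h k = h i" if "k \<ge> i" for k
      using that
    proof (induction k rule: dec_induct)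
      case (step k)
      have "h (Suc k) - h k = 0" using z step.hyps(1) by blast
      then show ?case using step.IH by simp
    qed simp
    consider "h i > 0" | "h i < 0" | "h i = 0" by linarith
    then show ?thesis
    proof cases
      case 1
      then have "\<forall>k\<ge>i. h k > 0" using c by (metis (no_types))
      then show ?thesis by blast
    next
      case 2
      then have "\<forall>k\<ge>i. h k < 0" using c by (metis (no_types))
      then show ?thesis by blast
    next
      case 3
      then have "\<forall>k\<ge>i. h k = 0" using c by (metis (no_types))
      then show ?thesis by blast
    qed
  qed
qed

theorem corollary3:
  fixes A B :: "real^'n^'n" and C :: "real^'n \<Rightarrow> real"
    and i m :: nat and v :: "real list" and \<omega>0 :: "real^'n"
  assumes "linear C" and "i \<ge> 1" and "length v = i"
  shows "(\<exists>k0\<ge>i. \<forall>k\<ge>k0. C ((((*v) B) ^^ m) (eval_at_list (Qpoly A B i k) v *v \<omega>0)) \<noteq> 0)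
       \<or> (\<forall>k\<ge>i. C ((((*v) B) ^^ m) (eval_at_list (Qpoly A B i k) v *v \<omega>0)) = 0)"
proof -
  define F where "F P = C ((((*v) B) ^^ m) (eval_at_list P v *v \<omega>0))" for P :: "'n mpoly_mat"
  obtain d where d: "\<forall>k\<ge>i. fdiff d (Qpoly A B i) k = 0" using Q_fdiff by blast
  have Fd: "F (P - Q) = F P - F Q" if "fs P" "fs Q" for P Q
    unfolding F_def eval_at_list_def eval_diff[OF that] matrix_vector_mult_diff_rdistrib iter_diff
    using linear_diff[OF assms(1)] by simp
  have F0: "F 0 = 0"
    unfolding F_def eval_at_list_def eval_mp_def using linear_0[OF assms(1)]
    by (simp add: iter_zero)
  have "\<forall>k\<ge>i. fdiff d (\<lambda>k. F (Qpoly A B i k)) k = 0"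
  proof (intro allI impI)
    fix k assume "k \<ge> i"
    have "fdiff d (\<lambda>k. F (Qpoly A B i k)) k = F (fdiff d (Qpoly A B i) k)"
      by (rule conjunct1[OF fdiff_comp[of "{P. fs P}" F "Qpoly A B i" d k]]) (auto simp: fs_diff Fd fs_Q)
    then show "fdiff d (\<lambda>k. F (Qpoly A B i k)) k = 0" using d \<open>k \<ge> i\<close> F0 by simp
  qed
  from real_seq_lemma[OF this] show ?thesis
    unfolding F_def by (metis less_irrefl)
qed

end
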